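(* Let $n,s,k$ be integers with $0\le s\le n$ and $n\ge k>1$. Then $F_{s,k}(n)=(-1)^k F_{n-s,k}(n)$.
   Context: For an integer $j\ge0$, $\binom{x}{j}=x(x-1)\cdots(x-j+1)/j!$ as a polynomial in $x$, and $\binom{x}{j}=0$ for $j<0$. For integers $s\ge1$, $k\ge1$, the Moser polynomial is $F_{s,k}(x)=\sum_{p=1}^{s}(-1)^{p-1}p^{k-1}\binom{x}{s-p}$; for integers $s<1$ set $F_{s,k}\equiv0$. *)

theory Defs
  imports Complex_Main
begin

definition binom_int :: "'a::field_char_0 \<Rightarrow> int \<Rightarrow> 'a" where
  "binom_int x j = (if j < 0 then 0 else x gchoose (nat j))"

definition moserF :: "int \<Rightarrow> nat \<Rightarrow> 'a::field_char_0 \<Rightarrow> 'a" where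
  "moserF s k x = (if s < 1 then 0 else
     (\<Sum>p\<in>{1..s}. (-1) ^ nat (p - 1) * of_int p ^ (k - 1) * binom_int x (s - p)))"

end

theory Submission imports Defs begin

definition Salt :: "nat \<Rightarrow> nat \<Rightarrow> real \<Rightarrow> real" where
  "Salt n m a = (\<Sum>j\<le>n. (-1)^j * real (n choose j) * (a - real j)^m)"

lemma Salt_rec: "Salt (Suc n) (Suc m) a = a * Salt (Suc n) m a + real (Suc n) * Salt n m (a - 1)"
proof -
  let ?h = "\<lambda>j. (-1)^j * real (Suc n choose j) * real j * (a - real j)^m"
  have "Salt (Suc n) (Suc m) a = (\<Sum>j\<le>Suc n. a * ((-1)^j * real (Suc n choose j) * (a - real j)^m) - ?h j)"
    unfolding Salt_def by (intro sum.cong) (auto simp: algebra_simps)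
  also have "\<dots> = a * Salt (Suc n) m a - (\<Sum>j\<le>Suc n. ?h j)"
    unfolding Salt_def by (simp only: sum_subtractf sum_distrib_left)
  also have "(\<Sum>j\<le>Suc n. ?h j) = ?h 0 + (\<Sum>i\<le>n. ?h (Suc i))"
    by (rule sum.atMost_Suc_shift)
  also have "(\<Sum>i\<le>n. ?h (Suc i)) = (\<Sum>i\<le>n. - (real (Suc n) * ((-1)^i * real (n choose i) * (a - 1 - real i)^m)))"
  proof (intro sum.cong refl)
    fix i
    have e: "real (Suc n choose Suc i) * real (Suc i) = real (Suc n) * real (n choose i)"
      using Suc_times_binomial[of i n] by (metis mult.commute of_nat_mult)
    have "?h (Suc i) = - ((-1)^i * (real (Suc n choose Suc i) * real (Suc i)) * (a - 1 - real i)^m)"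
      by (simp add: algebra_simps)
    also have "\<dots> = - (real (Suc n) * ((-1)^i * real (n choose i) * (a - 1 - real i)^m))"
      by (simp only: e) (simp add: algebra_simps)
    finally show "?h (Suc i) = - (real (Suc n) * ((-1)^i * real (n choose i) * (a - 1 - real i)^m))" .
  qed
  also have "\<dots> = - (real (Suc n) * Salt n m (a - 1))"
    unfolding Salt_def by (simp add: sum_negf sum_distrib_left)
  finally show ?thesis by simp
qed

lemma Salt_zero: "m < n \<Longrightarrow> Salt n m a = 0"
proof (induction n arbitrary: m a)
  case 0 then show ?case by simp
next
  case (Suc n)
  note outer = Suc.IH
  show ?case using Suc.prems
  proof (induction m arbitrary: a)
    case 0
    show ?case unfolding Salt_def using choose_alternating_sum[of "Suc n", where 'a=real] by simp
  next
    case (Suc m)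
    have "Salt (Suc n) m a = 0" using Suc by simp
    moreover have "Salt n m (a - 1) = 0" using Suc.prems outer by simp
    ultimately show ?case by (simp add: Salt_rec)
  qed
qed

lemma m1sq: "(-1::real)^j * (-1)^j = 1"
  by (simp add: power_add[symmetric])

lemma sign1: "j < S \<Longrightarrow> (-1::real)^(S - Suc j) = -((-1)^S*(-1)^j)"
proof -
  assume "j < S"
  then obtain d where S: "S = Suc (d + j)" by (metis add.commute less_imp_Suc_add)
  have "(-1::real)^S*(-1)^j = - ((-1)^d * ((-1)^j * (-1)^j))" unfolding S by (simp add: power_add)
  then show ?thesis using S by (simp add: m1sq)
qed

lemma sign2: "i \<le> N \<Longrightarrow> (-1::real)^(N-i) = (-1)^N*(-1)^i"
proof -
  assume "i \<le> N"
  then obtain d where S: "N = d + i" by (metis le_add_diff_inverse2)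
  have "(-1::real)^N*(-1)^i = (-1)^d * ((-1)^i * (-1)^i)" unfolding S by (simp add: power_add)
  then show ?thesis using S by (simp add: m1sq)
qed

definition G :: "nat \<Rightarrow> nat \<Rightarrow> nat \<Rightarrow> real" where
  "G k N S = (\<Sum>j<S. (-1)^j * real (N choose j) * (real S - real j)^(k-1))"

lemma moser_nat: "moserF (int S) k (real N) = - ((-1)^S * G k N S)"
proof (cases "S = 0")
  case True then show ?thesis by (simp add: moserF_def G_def)
next
  case False
  have img: "{1..int S} = (\<lambda>j. int S - int j) ` {..<S}"
  proof (intro set_eqI iffI)
    fix p assume "p \<in> {1..int S}"
    then have "p = int S - int (nat (int S - p))" "nat (int S - p) < S" by auto
    then show "p \<in> (\<lambda>j. int S - int j) ` {..<S}" by blast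
  qed auto
  have inj: "inj_on (\<lambda>j. int S - int j) {..<S}" by (auto simp: inj_on_def)
  have "moserF (int S) k (real N) = (\<Sum>p\<in>{1..int S}. (-1) ^ nat (p - 1) * of_int p ^ (k - 1) * binom_int (real N) (int S - p))"
    using False by (simp add: moserF_def)
  also have "\<dots> = (\<Sum>j<S. (-1) ^ nat (int S - int j - 1) * of_int (int S - int j) ^ (k - 1) * binom_int (real N) (int S - (int S - int j)))"
    unfolding img by (subst sum.reindex[OF inj]) simp
  also have "\<dots> = (\<Sum>j<S. - ((-1)^S * ((-1)^j * real (N choose j) * (real S - real j)^(k-1))))"
  proof (intro sum.cong refl)
    fix j assume j: "j \<in> {..<S}"
    then have n1: "nat (int S - int j - 1) = S - 1 - j" by auto
    have b: "binom_int (real N) (int S - (int S - int j)) = real (N choose j)"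
      by (simp add: binom_int_def binomial_gbinomial)
    have o: "(of_int (int S - int j) :: real) = real S - real j" by simp
    show "(-1) ^ nat (int S - int j - 1) * of_int (int S - int j) ^ (k - 1) * binom_int (real N) (int S - (int S - int j)) = - ((-1)^S * ((-1)^j * real (N choose j) * (real S - real j)^(k-1)))"
      using j unfolding n1 b o by (simp add: algebra_simps sign1[OF j[simplified]])
  qed
  also have "\<dots> = - ((-1)^S * G k N S)"
    unfolding G_def by (simp add: sum_negf sum_distrib_left)
  finally show ?thesis .
qed


lemma G_sym:
  assumes SN: "S \<le> N" and kN: "k - 1 < N" and k1: "k > 1"
  shows "G k N S = (-1)^(N+k) * G k N (N-S)"
proof -
  let ?f = "\<lambda>j. (-1)^j * real (N choose j) * (real S - real j)^(k-1)"
  have z: "Salt N (k-1) (real S) = 0" by (rule Salt_zero) (fact kN)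
  have split: "{..N} = {..<S} \<union> insert S {Suc S..N}" using SN by auto
  have inj: "inj_on (\<lambda>i. N - i) {..<N-S}" by (auto simp: inj_on_def)
  have img: "{Suc S..N} = (\<lambda>i. N - i) ` {..<N-S}"
  proof (intro set_eqI iffI)
    fix x assume "x \<in> {Suc S..N}"
    then have "x = N - (N - x)" "N - x < N - S" by auto
    then show "x \<in> (\<lambda>i. N - i) ` {..<N-S}" by blast
  qed auto
  obtain k' where k': "k = Suc k'" using k1 by (cases k) auto
  have trm: "?f (N - i) = - ((-1)^(N+k) * ((-1)^i * real (N choose i) * (real (N-S) - real i)^(k-1)))"
    if i: "i \<in> {..<N-S}" for i
  proof -
    from i have iN: "i \<le> N" by auto
    have c: "N choose (N - i) = N choose i" using binomial_symmetric[OF iN] by simp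
    have r1: "real S - real (N - i) = - (real (N-S) - real i)" using iN SN by (simp add: of_nat_diff)
    have s1: "?f (N - i) = (-1)^(N-i) * real (N choose (N - i)) * (real S - real (N - i))^(k-1)" by simp
    have s2: "(-1)^(N-i) * real (N choose (N - i)) * (real S - real (N - i))^(k-1) = ((-1)^N * (-1)^i) * real (N choose i) * ((-1)^(k-1) * (real (N-S) - real i)^(k-1))"
      unfolding c r1 sign2[OF iN] by (subst power_minus) (rule refl)
    have s3: "((-1::real)^N * (-1)^i) * real (N choose i) * ((-1)^(k-1) * (real (N-S) - real i)^(k-1)) = - ((-1)^(N+k) * ((-1)^i * real (N choose i) * (real (N-S) - real i)^(k-1)))"
      unfolding k' by (simp add: power_add mult_ac)
    show ?thesis using s1 s2 s3 by (metis (no_types))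
  qed
  have "Salt N (k-1) (real S) = sum ?f {..<S} + sum ?f (insert S {Suc S..N})"
    unfolding Salt_def split by (subst sum.union_disjoint) auto
  also have "sum ?f (insert S {Suc S..N}) = sum ?f {Suc S..N}" using k1 by simp
  also have "\<dots> = (\<Sum>i<N-S. ?f (N - i))"
    unfolding img by (rule sum.reindex[OF inj, unfolded comp_def])
  also have "\<dots> = (\<Sum>i<N-S. - ((-1)^(N+k) * ((-1)^i * real (N choose i) * (real (N-S) - real i)^(k-1))))"
    by (rule sum.cong[OF refl trm])
  also have "\<dots> = - ((-1)^(N+k) * G k N (N-S))"
    unfolding G_def by (simp add: sum_negf sum_distrib_left)
  finally have "G k N S - (-1)^(N+k) * G k N (N-S) = 0" using z unfolding G_def by simp
  then show ?thesis by simp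
qed

theorem mainTheorem19:
  fixes n s :: int and k :: nat
  assumes "0 \<le> s" and "s \<le> n" and "int k \<le> n" and "k > 1"
  shows "moserF s k (of_int n :: real) = (-1) ^ k * moserF (n - s) k (of_int n :: real)"
proof -
  obtain S N where S: "s = int S" and N: "n = int N" using assms
    by (metis nonneg_int_cases order_trans)
  have SN: "S \<le> N" using assms S N by simp
  have ns: "n - s = int (N - S)" using S N SN by simp
  have kN: "k - 1 < N" using assms N by simp
  have on: "(of_int n :: real) = real N" using N by simp
  have "moserF s k (of_int n :: real) = - ((-1)^S * ((-1)^(N+k) * G k N (N-S)))"
    unfolding on S moser_nat G_sym[OF SN kN assms(4)] ..
  also have "\<dots> = (-1)^k * (- ((-1)^(N-S) * G k N (N-S)))"
  proof -
    have e: "(-1::real)^S * (-1)^(N+k) = (-1)^k * (-1)^(N-S)"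
      by (simp add: sign2[OF SN] power_add mult_ac)
    have "- ((-1::real)^S * ((-1)^(N+k) * G k N (N-S))) = - (((-1)^S * (-1)^(N+k)) * G k N (N-S))"
      by (simp only: mult.assoc)
    also have "\<dots> = - (((-1)^k * (-1)^(N-S)) * G k N (N-S))" by (simp only: e)
    also have "\<dots> = (-1)^k * (- ((-1)^(N-S) * G k N (N-S)))" by (simp only: mult.assoc mult_minus_right)
    finally show ?thesis .
  qed
  also have "\<dots> = (-1) ^ k * moserF (n - s) k (of_int n :: real)"
    unfolding ns on moser_nat ..
  finally show ?thesis .
qed

end
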